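(* Every instance of the Balancing with Conflicts game with $n$ players and $m$ machines satisfies: - if $n\ge m$, it is $\left(2-\frac1m+\frac{m-1}{n},\,0\right)$-semi-smooth; - if $n<m$, it is $\left(1+\frac{2n-2}{m},\,0\right)$-semi-smooth. In both cases the witnessing mixed strategy has every player choose each machine with probability $\frac1m$.
   Context: An instance of the Balancing with Conflicts (BwC) game consists of: - players $N=\{1,\dots,n\}$; - machines $M=\{1,\dots,m\}$; - a simple undirected graph $G=(N,E)$. Each player chooses one machine, so a state is $\vec s\in M^n$. Let $X_k(\vec s)=\{i:s_i=k\}$ and $x_k(\vec s)=|X_k(\vec s)|$. For $X\subseteq N$, $e(X)$ is the number of edges of $G$ with both endpoints in $X$. For a player $i$, $e(\{i\},X)$ is the number of neighbours of $i$ in $X$. The cost of player $i$ with $s_i=k$ is $c_i(\vec s)=x_k(\vec s)+e(\{i\},X_k(\vec s))$. The social cost is $$c(\vec s)=\sum_ic_i(\vec s)=\sum_{k=1}^m\big(x_k(\vec s)^2+2e(X_k(\vec s))\big),$$ and $\vec s^*$ is a state minimizing $c$. A cost-minimization game is $(\lambda,\mu)$-semi-smooth if there exist probability distributions $\sigma_i$ over the strategies of each player $i$ such that for every state $\vec s$, $$\sum_{i\in N}\mathbf E_{s_i'\sim\sigma_i}[c_i(s_i',\vec s_{-i})]\le\lambda c(\vec s^* )+\mu c(\vec s).$$ *)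

theory Defs
  imports "HOL-Probability.Probability"
begin

text \<open>Balancing with Conflicts. Players are 0..n-1, machines are 0..m-1.
  The conflict graph is a simple undirected graph on the players, given by a
  symmetric irreflexive relation E.\<close>

definition simple_graph :: "(nat \<Rightarrow> nat \<Rightarrow> bool) \<Rightarrow> bool" where
  "simple_graph E \<longleftrightarrow> (\<forall>i j. E i j \<longrightarrow> E j i) \<and> (\<forall>i. \<not> E i i)"

definition bwc_states :: "nat \<Rightarrow> nat \<Rightarrow> (nat \<Rightarrow> nat) set" where
  "bwc_states n m = {s. \<forall>i<n. s i < m}"

definition load_set :: "nat \<Rightarrow> (nat \<Rightarrow> nat) \<Rightarrow> nat \<Rightarrow> nat set" where
  "load_set n s k = {i. i < n \<and> s i = k}"

definition nbrs_in :: "(nat \<Rightarrow> nat \<Rightarrow> bool) \<Rightarrow> nat \<Rightarrow> nat set \<Rightarrow> nat" where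
  "nbrs_in E i X = card {j \<in> X. E i j}"

definition bwc_cost :: "nat \<Rightarrow> (nat \<Rightarrow> nat \<Rightarrow> bool) \<Rightarrow> (nat \<Rightarrow> nat) \<Rightarrow> nat \<Rightarrow> real" where
  "bwc_cost n E s i = real (card (load_set n s (s i))) + real (nbrs_in E i (load_set n s (s i)))"

definition bwc_social_cost :: "nat \<Rightarrow> (nat \<Rightarrow> nat \<Rightarrow> bool) \<Rightarrow> (nat \<Rightarrow> nat) \<Rightarrow> real" where
  "bwc_social_cost n E s = (\<Sum>i<n. bwc_cost n E s i)"

definition bwc_semi_smooth_with ::
  "nat \<Rightarrow> nat \<Rightarrow> (nat \<Rightarrow> nat \<Rightarrow> bool) \<Rightarrow> (nat \<Rightarrow> nat pmf) \<Rightarrow> real \<Rightarrow> real \<Rightarrow> bool" where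
  "bwc_semi_smooth_with n m E \<sigma> lam mu \<longleftrightarrow>
     (\<forall>i<n. set_pmf (\<sigma> i) \<subseteq> {..<m}) \<and>
     (\<forall>s_opt \<in> bwc_states n m.
        (\<forall>t \<in> bwc_states n m. bwc_social_cost n E s_opt \<le> bwc_social_cost n E t) \<longrightarrow>
        (\<forall>s \<in> bwc_states n m.
           (\<Sum>i<n. measure_pmf.expectation (\<sigma> i) (\<lambda>k. bwc_cost n E (s(i := k)) i))
             \<le> lam * bwc_social_cost n E s_opt + mu * bwc_social_cost n E s))"

definition bwc_semi_smooth ::
  "nat \<Rightarrow> nat \<Rightarrow> (nat \<Rightarrow> nat \<Rightarrow> bool) \<Rightarrow> real \<Rightarrow> real \<Rightarrow> bool" where
  "bwc_semi_smooth n m E lam mu \<longleftrightarrow> (\<exists>\<sigma>. bwc_semi_smooth_with n m E \<sigma> lam mu)"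

end

theory Submission
  imports Defs
begin

lemma count_lemma:
  fixes m :: nat
  assumes "finite A" "\<forall>j\<in>A. f j < m"
  shows "(\<Sum>k<m. card {j\<in>A. f j = k}) = card A"
proof -
  have "(\<Sum>k<m. card {j\<in>A. f j = k}) = (\<Sum>k<m. \<Sum>j\<in>{j\<in>A. f j = k}. (1::nat))"
    by simp
  also have "\<dots> = (\<Sum>j\<in>A. (1::nat))"
    using sum.group[of A "{..<m}" f "\<lambda>_. 1::nat"] assms by auto
  finally show ?thesis by simp
qed

lemma player_sum:
  assumes E: "simple_graph E" and i: "i < n" and s: "s \<in> bwc_states n m"
  shows "(\<Sum>k<m. bwc_cost n E (s(i := k)) i) = real (n - 1 + m) + real (card {j. j < n \<and> E i j})"
proof -
  have nE: "\<not> E i i" using E by (simp add: simple_graph_def)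
  have sl: "\<forall>j\<in>{..<n}. s j < m" using s by (auto simp: bwc_states_def)
  have ls: "load_set n (s(i := k)) k = insert i {j\<in>{..<n}-{i}. s j = k}" for k
    using i by (auto simp: load_set_def)
  have c1: "card (load_set n (s(i := k)) k) = 1 + card {j\<in>{..<n}-{i}. s j = k}" for k
    unfolding ls by simp
  have c2: "nbrs_in E i (load_set n (s(i := k)) k) = card {j\<in>{j. j < n \<and> E i j}. s j = k}" for k
    unfolding nbrs_in_def ls using nE by (auto intro!: arg_cong[where f=card])
  have "(\<Sum>k<m. bwc_cost n E (s(i := k)) i)
      = (\<Sum>k<m. real (1 + card {j\<in>{..<n}-{i}. s j = k}) + real (card {j\<in>{j. j < n \<and> E i j}. s j = k}))"
    by (simp add: bwc_cost_def c1 c2)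
  also have "\<dots> = real (\<Sum>k<m. 1 + card {j\<in>{..<n}-{i}. s j = k}) + real (\<Sum>k<m. card {j\<in>{j. j < n \<and> E i j}. s j = k})"
    by (simp add: sum.distrib)
  also have "(\<Sum>k<m. 1 + card {j\<in>{..<n}-{i}. s j = k}) = (\<Sum>k<m. 1) + (\<Sum>k<m. card {j\<in>{..<n}-{i}. s j = k})"
    by (rule sum.distrib)
  also have "(\<Sum>k<m. card {j\<in>{..<n}-{i}. s j = k}) = n - 1"
    using count_lemma[of "{..<n}-{i}" s m] sl i by simp
  also have "(\<Sum>k<m. card {j\<in>{j. j < n \<and> E i j}. s j = k}) = card {j. j < n \<and> E i j}"
    using count_lemma[of "{j. j < n \<and> E i j}" s m] sl by auto
  finally have X: "(\<Sum>k<m. bwc_cost n E (s(i := k)) i) = real ((\<Sum>k<m. (1::nat)) + (n - 1)) + real (card {j. j < n \<and> E i j})" .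
  show ?thesis unfolding X by simp
qed

lemma sumdiv: "(\<Sum>i<n. (c + d i) / (x::real)) = (real n * c + (\<Sum>i<n. d i)) / x"
  by (simp add: sum_divide_distrib[symmetric] sum.distrib)

lemma lhs_eq:
  assumes E: "simple_graph E" and m: "m \<ge> 1" and s: "s \<in> bwc_states n m"
  shows "(\<Sum>i<n. measure_pmf.expectation (pmf_of_set {..<m}) (\<lambda>k. bwc_cost n E (s(i := k)) i))
     = (real n * (real n + real m - 1) + (\<Sum>i<n. real (card {j. j < n \<and> E i j}))) / real m"
proof -
  have "(\<Sum>i<n. measure_pmf.expectation (pmf_of_set {..<m}) (\<lambda>k. bwc_cost n E (s(i := k)) i))
      = (\<Sum>i<n. (real (n - 1 + m) + real (card {j. j < n \<and> E i j})) / real m)"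
    apply (rule sum.cong, simp)
    apply (subst integral_pmf_of_set)
    using m player_sum[OF E _ s] by auto
  also have "\<dots> = (real n * real (n - 1 + m) + (\<Sum>i<n. real (card {j. j < n \<and> E i j}))) / real m"
    by (rule sumdiv)
  also have "real n * real (n - 1 + m) = real n * (real n + real m - 1)" using m by (cases n) auto
  finally show ?thesis .
qed

lemma Q_sq:
  assumes t: "t \<in> bwc_states n m" and m: "m \<ge> 1"
  shows "real n ^ 2 / real m \<le> (\<Sum>i<n. real (card (load_set n t (t i))))"
proof -
  define x where "x k = real (card (load_set n t k))" for k
  have tl: "t ` {..<n} \<subseteq> {..<m}" using t by (auto simp: bwc_states_def)
  have "(\<Sum>i<n. real (card (load_set n t (t i)))) = (\<Sum>k<m. \<Sum>i\<in>{i\<in>{..<n}. t i = k}. x (t i))"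
    unfolding x_def by (rule sum.group[symmetric]) (use tl in auto)
  also have "\<dots> = (\<Sum>k<m. x k * x k)"
  proof (rule sum.cong, simp)
    fix k
    have ls: "{i\<in>{..<n}. t i = k} = load_set n t k" by (auto simp: load_set_def)
    have cx: "real (card {i\<in>{..<n}. t i = k}) = x k" unfolding x_def ls ..
    have "(\<Sum>i\<in>{i\<in>{..<n}. t i = k}. x (t i)) = (\<Sum>i\<in>{i\<in>{..<n}. t i = k}. x k)"
      by (rule sum.cong) auto
    also have "\<dots> = real (card {i\<in>{..<n}. t i = k}) * x k" by simp
    also have "\<dots> = x k * x k" by (simp only: cx)
    finally show "(\<Sum>i\<in>{i\<in>{..<n}. t i = k}. x (t i)) = x k * x k" .
  qed
  finally have Q: "(\<Sum>i<n. real (card (load_set n t (t i)))) = (\<Sum>k<m. x k * x k)" .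
  have sx: "(\<Sum>k<m. x k) = real n"
  proof -
    have "(\<Sum>k<m. card {j\<in>{..<n}. t j = k}) = card {..<n}"
      by (rule count_lemma) (use t in \<open>auto simp: bwc_states_def\<close>)
    moreover have "load_set n t k = {j\<in>{..<n}. t j = k}" for k by (auto simp: load_set_def)
    ultimately have "(\<Sum>k<m. card (load_set n t k)) = n" by simp
    then have "real (\<Sum>k<m. card (load_set n t k)) = real n" by simp
    then show ?thesis unfolding x_def by (simp only: of_nat_sum)
  qed
  define a where "a = real n / real m"
  have "0 \<le> (\<Sum>k<m. (x k - a)^2)" by (simp add: sum_nonneg)
  also have "\<dots> = (\<Sum>k<m. x k * x k - 2 * a * x k + a^2)"
    by (rule sum.cong) (simp_all add: power2_eq_square algebra_simps)
  also have "\<dots> = (\<Sum>k<m. x k * x k) - 2 * a * (\<Sum>k<m. x k) + real m * a^2"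
    by (simp add: sum.distrib sum_subtractf sum_distrib_left)
  also have "\<dots> = (\<Sum>k<m. x k * x k) - real n ^ 2 / real m"
    using m unfolding sx a_def by (simp add: field_simps power2_eq_square)
  finally show ?thesis using Q by simp
qed

lemma Q_n:
  shows "real n \<le> (\<Sum>i<n. real (card (load_set n t (t i))))"
proof -
  have "(\<Sum>i<n. (1::real)) \<le> (\<Sum>i<n. real (card (load_set n t (t i))))"
  proof (rule sum_mono)
    fix i assume "i \<in> {..<n}"
    then have "i \<in> load_set n t (t i)" by (simp add: load_set_def)
    moreover have "finite (load_set n t (t i))" by (simp add: load_set_def)
    ultimately have "card (load_set n t (t i)) \<ge> 1"
      by (metis One_nat_def Suc_leI card_gt_0_iff empty_iff)
    then show "1 \<le> real (card (load_set n t (t i)))" by simp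
  qed
  then show ?thesis by simp
qed

lemma D_bound:
  shows "(\<Sum>i<n. real (card {j. j < n \<and> E i j}))
     \<le> (\<Sum>i<n. real (nbrs_in E i (load_set n t (t i)))) + real n * real n
        - (\<Sum>i<n. real (card (load_set n t (t i))))"
proof -
  have "(\<Sum>i<n. real (card {j. j < n \<and> E i j}))
     \<le> (\<Sum>i<n. real (nbrs_in E i (load_set n t (t i))) + (real n - real (card (load_set n t (t i)))))"
  proof (rule sum_mono)
    fix i assume "i \<in> {..<n}"
    define X where "X = load_set n t (t i)"
    have Xs: "X \<subseteq> {..<n}" by (auto simp: X_def load_set_def)
    have "{j. j < n \<and> E i j} \<subseteq> {j\<in>X. E i j} \<union> ({..<n} - X)" using Xs by auto
    have fX: "finite X" using Xs finite_subset by blast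
    hence "card {j. j < n \<and> E i j} \<le> card ({j\<in>X. E i j} \<union> ({..<n} - X))"
      using \<open>{j. j < n \<and> E i j} \<subseteq> _\<close> by (intro card_mono) auto
    also have "\<dots> \<le> card {j\<in>X. E i j} + card ({..<n} - X)" by (rule card_Un_le)
    also have "card ({..<n} - X) = n - card X"
      using Xs by (simp add: card_Diff_subset finite_subset)
    finally have "card {j. j < n \<and> E i j} \<le> card {j\<in>X. E i j} + (n - card X)" .
    moreover have "card X \<le> n" using Xs by (metis card_lessThan card_mono finite_lessThan)
    ultimately show "real (card {j. j < n \<and> E i j}) \<le> real (nbrs_in E i X) + (real n - real (card X))"
      unfolding nbrs_in_def by linarith
  qed
  also have "\<dots> = (\<Sum>i<n. real (nbrs_in E i (load_set n t (t i)))) + real n * real n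
        - (\<Sum>i<n. real (card (load_set n t (t i))))"
    by (simp add: sum.distrib sum_subtractf)
  finally show ?thesis .
qed

lemma social_eq: "bwc_social_cost n E t = (\<Sum>i<n. real (card (load_set n t (t i)))) + (\<Sum>i<n. real (nbrs_in E i (load_set n t (t i))))"
  by (simp add: bwc_social_cost_def bwc_cost_def sum.distrib)

lemma arith1:
  fixes n m q f D :: real
  assumes "n \<ge> m" "m \<ge> 1" "q \<ge> n^2/m" "f \<ge> 0" "D \<le> f + n*n - q"
  shows "(n * (n + m - 1) + D) / m \<le> (2 - 1/m + (m - 1)/n) * (q + f)"
proof -
  have n: "n > 0" using assms by simp
  have l1: "f / m \<le> (2 - 1/m + (m - 1)/n) * f"
  proof -
    have a: "1/m \<le> 1" using assms by simp
    have b: "(m-1)/n \<ge> 0" using assms n by simp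
    have "1/m \<le> 2 - 1/m + (m-1)/n" using a b by linarith
    then show ?thesis using assms(4) by (metis divide_inverse inverse_eq_divide mult.commute mult_right_mono)
  qed
  have l2a: "(2 - 1/m + (m - 1)/n) * q + q/m = ((2*n + m - 1)/n) * q" using n assms by (simp add: field_simps)
  have l2b: "((2*n + m - 1)/n) * q \<ge> ((2*n + m - 1)/n) * (n^2/m)"
    using assms n by (intro mult_left_mono) auto
  have e: "((2*n + m - 1)/n) * (n^2/m) = (n*(2*n+m-1))/m" using n assms by (simp add: power2_eq_square field_simps)
  have l2: "(2 - 1/m + (m - 1)/n) * q + q/m \<ge> (n*(2*n+m-1))/m"
    using l2a l2b e by linarith
  have "(n * (n + m - 1) + D) / m \<le> (n * (n + m - 1) + f + n*n - q) / m"
    using assms by (simp add: divide_right_mono)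
  also have "\<dots> = (n*(2*n+m-1))/m + f/m - q/m" by (simp add: diff_divide_distrib add_divide_distrib algebra_simps)
  also have "\<dots> \<le> (2 - 1/m + (m - 1)/n) * (q + f)" using l1 l2 by (simp add: distrib_left)
  finally show ?thesis .
qed

lemma arith2:
  fixes n m q f D :: real
  assumes "n < m" "n \<ge> 1" "q \<ge> n" "f \<ge> 0" "D \<le> f + n*n - q"
  shows "(n * (n + m - 1) + D) / m \<le> (1 + (2 * n - 2)/m) * (q + f)"
proof -
  have m: "m > 1" using assms by simp
  have l1: "f / m \<le> (1 + (2 * n - 2)/m) * f"
  proof -
    have a: "1/m \<le> 1" using m by simp
    have b: "(2 * n - 2)/m \<ge> 0" using assms m by simp
    have "1/m \<le> 1 + (2 * n - 2)/m" using a b by linarith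
    then show ?thesis using assms(4) by (metis divide_inverse inverse_eq_divide mult.commute mult_right_mono)
  qed
  have "(1 + (2 * n - 2)/m) * q + q/m = ((m + 2*n - 1)/m) * q" using m by (simp add: field_simps)
  also have "\<dots> \<ge> ((m + 2*n - 1)/m) * n"
    using assms m by (intro mult_left_mono) auto
  finally have l2: "(1 + (2 * n - 2)/m) * q + q/m \<ge> (n*(2*n+m-1))/m"
    using m by (simp add: field_simps)
  have "(n * (n + m - 1) + D) / m \<le> (n * (n + m - 1) + f + n*n - q) / m"
    using assms m by (simp add: divide_right_mono)
  also have "\<dots> = (n*(2*n+m-1))/m + f/m - q/m" by (simp add: diff_divide_distrib add_divide_distrib algebra_simps)
  also have "\<dots> \<le> (1 + (2 * n - 2)/m) * (q + f)" using l1 l2 by (simp add: distrib_left)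
  finally show ?thesis .
qed

theorem theorem4:
  fixes n m :: nat and E :: "nat \<Rightarrow> nat \<Rightarrow> bool"
  assumes "m \<ge> 1" and "simple_graph E"
  shows "(n \<ge> m \<longrightarrow>
            bwc_semi_smooth_with n m E (\<lambda>i. pmf_of_set {..<m})
              (2 - 1 / real m + (real m - 1) / real n) 0)
       \<and> (n < m \<longrightarrow>
            bwc_semi_smooth_with n m E (\<lambda>i. pmf_of_set {..<m})
              (1 + (2 * real n - 2) / real m) 0)"
proof -
  have "0 \<in> {..<m}" using assms by simp
  then have ne: "{..<m} \<noteq> {}" by blast
  have sp: "\<forall>i<n. set_pmf (pmf_of_set {..<m}) \<subseteq> {..<m}" using set_pmf_of_set[OF ne] by simp
  define D where "D = (\<Sum>i<n. real (card {j. j < n \<and> E i j}))"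
  define Q where "Q t = (\<Sum>i<n. real (card (load_set n t (t i))))" for t
  define F where "F t = (\<Sum>i<n. real (nbrs_in E i (load_set n t (t i))))" for t
  have F0: "F t \<ge> 0" for t unfolding F_def by (simp add: sum_nonneg)
  have Db: "D \<le> F t + real n * real n - Q t" for t unfolding D_def F_def Q_def by (rule D_bound)
  have soc: "bwc_social_cost n E t = Q t + F t" for t unfolding Q_def F_def by (rule social_eq)
  have lhs: "(\<Sum>i<n. measure_pmf.expectation (pmf_of_set {..<m}) (\<lambda>k. bwc_cost n E (s(i := k)) i))
     = (real n * (real n + real m - 1) + D) / real m" if "s \<in> bwc_states n m" for s
    unfolding D_def using lhs_eq[OF assms(2,1) that] .
  show ?thesis
  proof (intro conjI impI)
    assume nm: "m \<le> n"
    show "bwc_semi_smooth_with n m E (\<lambda>i. pmf_of_set {..<m}) (2 - 1 / real m + (real m - 1) / real n) 0"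
      unfolding bwc_semi_smooth_with_def
    proof (intro conjI sp ballI impI)
      fix so s assume so: "so \<in> bwc_states n m" and s: "s \<in> bwc_states n m"
      have "real n ^ 2 / real m \<le> Q so" unfolding Q_def by (rule Q_sq[OF so assms(1)])
      then show "(\<Sum>i<n. measure_pmf.expectation (pmf_of_set {..<m}) (\<lambda>k. bwc_cost n E (s(i := k)) i))
          \<le> (2 - 1 / real m + (real m - 1) / real n) * bwc_social_cost n E so + 0 * bwc_social_cost n E s"
      proof -
        have "(real n * (real n + real m - 1) + D) / real m
            \<le> (2 - 1 / real m + (real m - 1) / real n) * (Q so + F so)"
          by (rule arith1) (use nm assms(1) F0 Db \<open>real n ^ 2 / real m \<le> Q so\<close> in auto)
        then show ?thesis unfolding lhs[OF s] soc by simp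
      qed
    qed
  next
    assume nm: "n < m"
    show "bwc_semi_smooth_with n m E (\<lambda>i. pmf_of_set {..<m}) (1 + (2 * real n - 2) / real m) 0"
      unfolding bwc_semi_smooth_with_def
    proof (intro conjI sp ballI impI)
      fix so s assume so: "so \<in> bwc_states n m" and s: "s \<in> bwc_states n m"
      show "(\<Sum>i<n. measure_pmf.expectation (pmf_of_set {..<m}) (\<lambda>k. bwc_cost n E (s(i := k)) i))
          \<le> (1 + (2 * real n - 2) / real m) * bwc_social_cost n E so + 0 * bwc_social_cost n E s"
      proof (cases "n = 0")
        case True
        have "D = 0" "Q so = 0" "F so = 0" unfolding D_def Q_def F_def using True by auto
        then show ?thesis unfolding lhs[OF s] soc using True by simp
      next
        case False
        have "real n \<le> Q so" unfolding Q_def by (rule Q_n)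
        then show ?thesis
        proof -
          have "(real n * (real n + real m - 1) + D) / real m
              \<le> (1 + (2 * real n - 2) / real m) * (Q so + F so)"
            by (rule arith2) (use nm False F0 Db \<open>real n \<le> Q so\<close> in auto)
          then show ?thesis unfolding lhs[OF s] soc by simp
        qed
      qed
    qed
  qed
qed

end
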